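(* Let $\hat D$ be any element of the algebra of operators on $C(P)$ generated by $\hat T_1,\dots,\hat T_n$, and let $\lambda,\mu\in P$ with $\lambda\sim\mu$. If $(\hat Df)(\lambda)=0$ for all $f\in C(P)$, then $(\hat Df)(\mu)=0$ for all $f\in C(P)$.
   Context: Let $R$ be an irreducible reduced crystallographic root system of rank $n$ in a Euclidean space $V$ with inner product $\langle\cdot,\cdot\rangle$, $\alpha^\vee:=2\alpha/\langle\alpha,\alpha\rangle$, weight lattice $P$, positive roots $R^+$ with simple roots $\alpha_1,\dots,\alpha_n$, finite Weyl group $W_0$ acting on $C(P)$ (functions $P\to\mathbb C$) by $(wf)(\lambda)=f(w^{-1}\lambda)$. $A:=\{x\in V:0<\langle x,\alpha^\vee\rangle<1\ \forall \alpha\in R^+\}$, $C:=\{x:\langle x,\alpha^\vee\rangle>0\ \forall\alpha\in R^+\}$. For $1\le j\le n$, $s_j$ is the reflection in $V_j:=\{x:\langle x,\alpha_j^\vee\rangle=0\}$, $q_j\in\mathbb R\setminus\{0\}$ are parameters, and $\hat T_j:=q_j+\chi_j(s_j-1)$ where $\chi_j$ multiplies by $\chi_j(\lambda)=q_j$ if $V_j$ separates $\lambda$ and $A$, $1$ if $\lambda\in V_j$, $q_j^{-1}$ otherwise. For $x\in V$, $W_{0,x}$ is the stabilizer of $x$ in $W_0$. Write $x\sim y$ iff $W_{0,x}=W_{0,y}$ and $x,y$ both lie in the closure of the same Weyl chamber $wC$ for some $w\in W_0$. *)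

theory Defs
  imports "HOL-Analysis.Analysis"
begin

definition coroot :: "'a::euclidean_space \<Rightarrow> 'a" where
  "coroot \<alpha> = (2 / (\<alpha> \<bullet> \<alpha>)) *\<^sub>R \<alpha>"

definition refl :: "'a::euclidean_space \<Rightarrow> 'a \<Rightarrow> 'a" where
  "refl \<alpha> x = x - (x \<bullet> coroot \<alpha>) *\<^sub>R \<alpha>"

definition root_system :: "'a::euclidean_space set \<Rightarrow> bool" where
  "root_system R \<longleftrightarrow> finite R \<and> 0 \<notin> R \<and> span R = UNIV \<and>
     (\<forall>\<alpha>\<in>R. refl \<alpha> ` R \<subseteq> R) \<and>
     (\<forall>\<alpha>\<in>R. \<forall>\<beta>\<in>R. \<beta> \<bullet> coroot \<alpha> \<in> \<int>)"

definition reduced_rs :: "'a::euclidean_space set \<Rightarrow> bool" where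
  "reduced_rs R \<longleftrightarrow> (\<forall>\<alpha>\<in>R. \<forall>c::real. c *\<^sub>R \<alpha> \<in> R \<longrightarrow> c = 1 \<or> c = -1)"

definition irreducible_rs :: "'a::euclidean_space set \<Rightarrow> bool" where
  "irreducible_rs R \<longleftrightarrow> \<not> (\<exists>R1 R2. R1 \<noteq> {} \<and> R2 \<noteq> {} \<and> R1 \<union> R2 = R \<and> R1 \<inter> R2 = {} \<and>
        (\<forall>a\<in>R1. \<forall>b\<in>R2. a \<bullet> b = 0))"

definition is_base :: "'a::euclidean_space set \<Rightarrow> nat \<Rightarrow> (nat \<Rightarrow> 'a) \<Rightarrow> bool" where
  "is_base R n alpha \<longleftrightarrow> inj_on alpha {1..n} \<and> alpha ` {1..n} \<subseteq> R \<and>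
     independent (alpha ` {1..n}) \<and>
     (\<forall>\<beta>\<in>R. \<exists>k::nat \<Rightarrow> int. \<beta> = (\<Sum>j=1..n. of_int (k j) *\<^sub>R alpha j) \<and>
        ((\<forall>j\<in>{1..n}. k j \<ge> 0) \<or> (\<forall>j\<in>{1..n}. k j \<le> 0)))"

definition pos_roots :: "'a::euclidean_space set \<Rightarrow> nat \<Rightarrow> (nat \<Rightarrow> 'a) \<Rightarrow> 'a set" where
  "pos_roots R n alpha = {\<beta>\<in>R. \<exists>k::nat \<Rightarrow> int. (\<forall>j\<in>{1..n}. k j \<ge> 0) \<and>
        \<beta> = (\<Sum>j=1..n. of_int (k j) *\<^sub>R alpha j)}"

definition weight_lattice :: "'a::euclidean_space set \<Rightarrow> 'a set" where
  "weight_lattice R = {x. \<forall>\<alpha>\<in>R. x \<bullet> coroot \<alpha> \<in> \<int>}"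

inductive_set weyl_group :: "'a::euclidean_space set \<Rightarrow> ('a \<Rightarrow> 'a) set" for R where
  id: "id \<in> weyl_group R"
| step: "w \<in> weyl_group R \<Longrightarrow> \<alpha> \<in> R \<Longrightarrow> refl \<alpha> \<circ> w \<in> weyl_group R"

definition alcove :: "'a::euclidean_space set \<Rightarrow> 'a set" where
  "alcove Rp = {x. \<forall>\<alpha>\<in>Rp. 0 < x \<bullet> coroot \<alpha> \<and> x \<bullet> coroot \<alpha> < 1}"

definition chamber :: "'a::euclidean_space set \<Rightarrow> 'a set" where
  "chamber Rp = {x. \<forall>\<alpha>\<in>Rp. 0 < x \<bullet> coroot \<alpha>}"

definition stabilizer :: "('a \<Rightarrow> 'a) set \<Rightarrow> 'a \<Rightarrow> ('a \<Rightarrow> 'a) set" where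
  "stabilizer W x = {w\<in>W. w x = x}"

definition wsim :: "('a::euclidean_space \<Rightarrow> 'a) set \<Rightarrow> 'a set \<Rightarrow> 'a \<Rightarrow> 'a \<Rightarrow> bool" where
  "wsim W C x y \<longleftrightarrow> stabilizer W x = stabilizer W y \<and>
     (\<exists>w\<in>W. x \<in> closure (w ` C) \<and> y \<in> closure (w ` C))"

definition separates :: "'a::euclidean_space \<Rightarrow> 'a \<Rightarrow> 'a set \<Rightarrow> bool" where
  "separates v y S \<longleftrightarrow> (y \<bullet> v < 0 \<and> (\<forall>a\<in>S. a \<bullet> v > 0)) \<or> (y \<bullet> v > 0 \<and> (\<forall>a\<in>S. a \<bullet> v < 0))"

definition chi :: "(nat \<Rightarrow> real) \<Rightarrow> (nat \<Rightarrow> 'a::euclidean_space) \<Rightarrow> 'a set \<Rightarrow> nat \<Rightarrow> 'a \<Rightarrow> complex" where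
  "chi q alpha A j x =
     (if separates (coroot (alpha j)) x A then complex_of_real (q j)
      else if x \<bullet> coroot (alpha j) = 0 then 1
      else complex_of_real (inverse (q j)))"

text \<open>hat T_j = q_j + chi_j (s_j - 1), acting on functions P -> C;
  (s_j f)(x) = f (s_j^{-1} x) = f (s_j x).\<close>
definition That :: "(nat \<Rightarrow> real) \<Rightarrow> (nat \<Rightarrow> 'a::euclidean_space) \<Rightarrow> 'a set \<Rightarrow> nat
    \<Rightarrow> ('a \<Rightarrow> complex) \<Rightarrow> ('a \<Rightarrow> complex)" where
  "That q alpha A j f = (\<lambda>x. complex_of_real (q j) * f x
       + chi q alpha A j x * (f (refl (alpha j) x) - f x))"

inductive_set gen_alg :: "(('b \<Rightarrow> complex) \<Rightarrow> ('b \<Rightarrow> complex)) set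
    \<Rightarrow> (('b \<Rightarrow> complex) \<Rightarrow> ('b \<Rightarrow> complex)) set" for G where
  gen: "D \<in> G \<Longrightarrow> D \<in> gen_alg G"
| scal: "(\<lambda>f. (\<lambda>x. c * f x)) \<in> gen_alg G"
| add: "D1 \<in> gen_alg G \<Longrightarrow> D2 \<in> gen_alg G \<Longrightarrow> (\<lambda>f. (\<lambda>x. D1 f x + D2 f x)) \<in> gen_alg G"
| smult: "D \<in> gen_alg G \<Longrightarrow> (\<lambda>f. (\<lambda>x. c * D f x)) \<in> gen_alg G"
| comp: "D1 \<in> gen_alg G \<Longrightarrow> D2 \<in> gen_alg G \<Longrightarrow> (\<lambda>f. D1 (D2 f)) \<in> gen_alg G"

end

theory Submission
  imports Defs
begin

lemma coroot_inner: "x \<bullet> coroot a = (2 / (a \<bullet> a)) * (x \<bullet> a)"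
  by (simp add: coroot_def)

lemma coroot_sign:
  assumes "a \<noteq> 0"
  shows "(x \<bullet> coroot a > 0 \<longleftrightarrow> x \<bullet> a > 0) \<and> (x \<bullet> coroot a < 0 \<longleftrightarrow> x \<bullet> a < 0)
       \<and> (x \<bullet> coroot a = 0 \<longleftrightarrow> x \<bullet> a = 0)"
proof -
  have p: "2 / (a \<bullet> a) > 0" using assms by simp
  have e: "x \<bullet> coroot a = (2 / (a \<bullet> a)) * (x \<bullet> a)" by (rule coroot_inner)
  show ?thesis unfolding e using p
    by (metis mult_pos_pos mult_pos_neg zero_less_mult_pos mult_less_cancel_left_pos mult_zero_right
        less_irrefl mult_eq_0_iff linorder_neqE_linordered_idom)
qed

lemma refl_refl: assumes "a \<noteq> 0" shows "refl a (refl a x) = x"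
proof -
  have "a \<bullet> coroot a = 2" using assms by (simp add: coroot_def)
  then show ?thesis unfolding refl_def
    by (simp add: inner_diff_left algebra_simps)
qed

lemma refl_inner: assumes "a \<noteq> 0" shows "refl a x \<bullet> refl a y = x \<bullet> y"
proof -
  have aa: "a \<bullet> a \<noteq> 0" using assms by simp
  show ?thesis unfolding refl_def coroot_def using aa
    by (simp add: inner_diff_left inner_diff_right algebra_simps inner_commute)
qed

lemma refl_fix: assumes "a \<noteq> 0" shows "refl a x = x \<longleftrightarrow> x \<bullet> coroot a = 0"
  using assms by (auto simp: refl_def)

lemma weyl_comp: "w1 \<in> weyl_group R \<Longrightarrow> w2 \<in> weyl_group R \<Longrightarrow> w1 \<circ> w2 \<in> weyl_group R"
proof (induction w1 rule: weyl_group.induct)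
  case id then show ?case by simp
next
  case (step w \<alpha>)
  then have "refl \<alpha> \<circ> (w \<circ> w2) \<in> weyl_group R" using weyl_group.step by blast
  then show ?case by (metis comp_assoc)
qed

lemma weyl_refl: "\<alpha> \<in> R \<Longrightarrow> refl \<alpha> \<in> weyl_group R"
  using weyl_group.step[OF weyl_group.id, of \<alpha>] by simp

lemma weyl_inv: assumes "0 \<notin> R" shows "w \<in> weyl_group R \<Longrightarrow> \<exists>v\<in>weyl_group R. v \<circ> w = id \<and> w \<circ> v = id"
proof (induction w rule: weyl_group.induct)
  case id then show ?case using weyl_group.id[of R] by (intro bexI[of _ id]) auto
next
  case (step w \<alpha>)
  then obtain v where v: "v \<in> weyl_group R" "v \<circ> w = id" "w \<circ> v = id" by blast
  have a0: "\<alpha> \<noteq> 0" using step assms by auto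
  have rr: "refl \<alpha> \<circ> refl \<alpha> = id" using refl_refl[OF a0] by (auto simp: fun_eq_iff)
  have "v \<circ> refl \<alpha> \<in> weyl_group R" using weyl_comp[OF v(1) weyl_refl[OF step(2)]] .
  moreover have "(v \<circ> refl \<alpha>) \<circ> (refl \<alpha> \<circ> w) = id"
    by (metis comp_assoc rr v(2) id_comp)
  moreover have "(refl \<alpha> \<circ> w) \<circ> (v \<circ> refl \<alpha>) = id"
    by (metis comp_assoc rr v(3) id_comp)
  ultimately show ?case by blast
qed

lemma weyl_inner: assumes "0 \<notin> R" shows "w \<in> weyl_group R \<Longrightarrow> w x \<bullet> w y = x \<bullet> y"
proof (induction w rule: weyl_group.induct)
  case id then show ?case by simp
next
  case (step w \<alpha>)
  have a0: "\<alpha> \<noteq> 0" using step assms by auto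
  show ?case using refl_inner[OF a0] step by simp
qed

lemma weyl_roots: assumes "root_system R" shows "w \<in> weyl_group R \<Longrightarrow> \<beta> \<in> R \<Longrightarrow> w \<beta> \<in> R"
proof (induction w arbitrary: \<beta> rule: weyl_group.induct)
  case id then show ?case by simp
next
  case (step w \<alpha>)
  then have "w \<beta> \<in> R" by blast
  then show ?case using assms step(2) unfolding root_system_def by auto
qed

lemma root_sign:
  assumes rs: "root_system R" and base: "is_base R n alpha" and g: "\<gamma> \<in> R"
  shows "(\<forall>c\<in>chamber (pos_roots R n alpha). c \<bullet> \<gamma> > 0) \<or> (\<forall>c\<in>chamber (pos_roots R n alpha). c \<bullet> \<gamma> < 0)"
proof -
  have g0: "\<gamma> \<noteq> 0" using rs g unfolding root_system_def by auto
  obtain k :: "nat \<Rightarrow> int" where k: "\<gamma> = (\<Sum>j=1..n. of_int (k j) *\<^sub>R alpha j)"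
    "(\<forall>j\<in>{1..n}. k j \<ge> 0) \<or> (\<forall>j\<in>{1..n}. k j \<le> 0)"
    using base g unfolding is_base_def by blast
  show ?thesis using k(2)
  proof
    assume "\<forall>j\<in>{1..n}. k j \<ge> 0"
    then have "\<gamma> \<in> pos_roots R n alpha" unfolding pos_roots_def using k(1) g by blast
    then have "\<forall>c\<in>chamber (pos_roots R n alpha). c \<bullet> \<gamma> > 0"
      unfolding chamber_def using coroot_sign[OF g0] by blast
    then show ?thesis by blast
  next
    assume kn: "\<forall>j\<in>{1..n}. k j \<le> 0"
    have "refl \<gamma> \<gamma> = - \<gamma>" using g0 by (simp add: refl_def coroot_def scaleR_2)
    then have mg: "- \<gamma> \<in> R" using rs g unfolding root_system_def by (metis image_subset_iff)
    have "- \<gamma> = (\<Sum>j=1..n. of_int ((\<lambda>j. - k j) j) *\<^sub>R alpha j)"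
      using k(1) by (simp add: sum_negf[symmetric])
    then have "- \<gamma> \<in> pos_roots R n alpha" unfolding pos_roots_def using kn mg
      by (intro CollectI conjI exI[of _ "\<lambda>j. - k j"]) auto
    then have "\<forall>c\<in>chamber (pos_roots R n alpha). c \<bullet> (- \<gamma>) > 0"
      unfolding chamber_def using coroot_sign[of "- \<gamma>"] g0 by auto
    then show ?thesis by auto
  qed
qed

lemma closure_sign:
  assumes rs: "root_system R" and base: "is_base R n alpha"
    and u: "u \<in> weyl_group R" and y: "y \<in> closure (u ` chamber (pos_roots R n alpha))"
    and z: "z \<in> closure (u ` chamber (pos_roots R n alpha))" and b: "\<beta> \<in> R"
  shows "\<not> (y \<bullet> \<beta> > 0 \<and> z \<bullet> \<beta> < 0)"
proof -
  let ?C = "chamber (pos_roots R n alpha)"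
  have R0: "0 \<notin> R" using rs unfolding root_system_def by auto
  obtain v where v: "v \<in> weyl_group R" "v \<circ> u = id" "u \<circ> v = id" using weyl_inv[OF R0 u] by blast
  have g: "v \<beta> \<in> R" using weyl_roots[OF rs v(1) b] .
  have ub: "u (v \<beta>) = \<beta>" using v(3) by (metis comp_apply id_apply)
  have eq: "\<And>c. u c \<bullet> \<beta> = c \<bullet> v \<beta>" using weyl_inner[OF R0 u] ub by metis
  from root_sign[OF rs base g] show ?thesis
  proof
    assume h: "\<forall>c\<in>?C. c \<bullet> v \<beta> > 0"
    have "u ` ?C \<subseteq> {x. x \<bullet> \<beta> \<ge> 0}" using h eq by (auto intro: less_imp_le)
    moreover have "closed {x. x \<bullet> \<beta> \<ge> (0::real)}"
      using closed_halfspace_ge[of 0 \<beta>] by (simp add: inner_commute)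
    ultimately have "closure (u ` ?C) \<subseteq> {x. x \<bullet> \<beta> \<ge> 0}" by (rule closure_minimal)
    then show ?thesis using z by auto
  next
    assume h: "\<forall>c\<in>?C. c \<bullet> v \<beta> < 0"
    have "u ` ?C \<subseteq> {x. x \<bullet> \<beta> \<le> 0}" using h eq by (auto intro: less_imp_le)
    moreover have "closed {x. x \<bullet> \<beta> \<le> (0::real)}"
      using closed_halfspace_le[of \<beta> 0] by (simp add: inner_commute)
    ultimately have "closure (u ` ?C) \<subseteq> {x. x \<bullet> \<beta> \<le> 0}" by (rule closure_minimal)
    then show ?thesis using y by auto
  qed
qed


lemma chi_eq:
  assumes "x \<bullet> coroot a > 0 \<longleftrightarrow> y \<bullet> coroot a > 0" and "x \<bullet> coroot a < 0 \<longleftrightarrow> y \<bullet> coroot a < 0"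
    and "a = alpha j"
  shows "chi q alpha A j x = chi q alpha A j y"
proof -
  have z: "x \<bullet> coroot a = 0 \<longleftrightarrow> y \<bullet> coroot a = 0" using assms(1,2) by (metis linorder_neqE_linordered_idom less_irrefl)
  show ?thesis unfolding chi_def separates_def using assms z by simp
qed

lemma orbit_sign:
  assumes rs: "root_system R" and base: "is_base R n alpha"
    and ws: "wsim (weyl_group R) (chamber (pos_roots R n alpha)) lam mu"
    and w: "w \<in> weyl_group R" and a: "a \<in> R"
  shows "(w lam \<bullet> coroot a > 0 \<longleftrightarrow> w mu \<bullet> coroot a > 0) \<and> (w lam \<bullet> coroot a < 0 \<longleftrightarrow> w mu \<bullet> coroot a < 0)"
proof -
  have R0: "0 \<notin> R" using rs unfolding root_system_def by auto
  have a0: "a \<noteq> 0" using a R0 by auto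
  obtain u where u: "u \<in> weyl_group R" "lam \<in> closure (u ` chamber (pos_roots R n alpha))"
    "mu \<in> closure (u ` chamber (pos_roots R n alpha))" using ws unfolding wsim_def by blast
  have st: "stabilizer (weyl_group R) lam = stabilizer (weyl_group R) mu" using ws unfolding wsim_def by blast
  obtain v where v: "v \<in> weyl_group R" "v \<circ> w = id" "w \<circ> v = id" using weyl_inv[OF R0 w] by blast
  have vw: "\<And>x. v (w x) = x" using v(2) by (metis comp_apply id_apply)
  have wv: "\<And>x. w (v x) = x" using v(3) by (metis comp_apply id_apply)
  have g: "v a \<in> R" using weyl_roots[OF rs v(1) a] .
  have eq: "\<And>x. w x \<bullet> a = x \<bullet> v a" using weyl_inner[OF R0 w] wv by metis
  have s1: "\<not> (lam \<bullet> v a > 0 \<and> mu \<bullet> v a < 0)" using closure_sign[OF rs base u(1) u(2) u(3) g] .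
  have s2: "\<not> (mu \<bullet> v a > 0 \<and> lam \<bullet> v a < 0)" using closure_sign[OF rs base u(1) u(3) u(2) g] .
  let ?t = "v \<circ> refl a \<circ> w"
  have t: "?t \<in> weyl_group R" using weyl_comp[OF weyl_comp[OF v(1) weyl_refl[OF a]] w] .
  have fixeq: "\<And>x. refl a (w x) = w x \<longleftrightarrow> ?t x = x"
    using vw wv by (metis comp_apply)
  have "?t lam = lam \<longleftrightarrow> ?t mu = mu" using st t unfolding stabilizer_def by blast
  then have "w lam \<bullet> coroot a = 0 \<longleftrightarrow> w mu \<bullet> coroot a = 0"
    using fixeq refl_fix[OF a0] by metis
  then have z: "lam \<bullet> v a = 0 \<longleftrightarrow> mu \<bullet> v a = 0" using coroot_sign[OF a0] eq by metis
  have "(lam \<bullet> v a > 0 \<longleftrightarrow> mu \<bullet> v a > 0) \<and> (lam \<bullet> v a < 0 \<longleftrightarrow> mu \<bullet> v a < 0)"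
    using s1 s2 z by (smt (verit))
  then show ?thesis using coroot_sign[OF a0] eq by metis
qed

lemma transfer:
  assumes rs: "root_system R" and base: "is_base R n alpha"
    and ws: "wsim (weyl_group R) (chamber (pos_roots R n alpha)) lam mu"
    and D: "D \<in> gen_alg ((\<lambda>j. That q alpha A j) ` {1..n})"
  shows "\<forall>f g. (\<forall>w\<in>weyl_group R. g (w lam) = f (w mu)) \<longrightarrow> (\<forall>w\<in>weyl_group R. D g (w lam) = D f (w mu))"
  using D
proof (induction D rule: gen_alg.induct)
  case (gen D)
  then obtain j where j: "j \<in> {1..n}" "D = That q alpha A j" by blast
  have aR: "alpha j \<in> R" using base j(1) unfolding is_base_def by blast
  show ?case
  proof (intro allI impI ballI)
    fix f g :: "'a \<Rightarrow> complex" and w assume h: "\<forall>w\<in>weyl_group R. g (w lam) = f (w mu)" and w: "w \<in> weyl_group R"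
    have c: "chi q alpha A j (w lam) = chi q alpha A j (w mu)"
      using orbit_sign[OF rs base ws w aR] chi_eq by blast
    have rw: "refl (alpha j) \<circ> w \<in> weyl_group R" using weyl_group.step[OF w aR] .
    have "g (refl (alpha j) (w lam)) = f (refl (alpha j) (w mu))" using h rw by auto
    then show "D g (w lam) = D f (w mu)" using j(2) c h w unfolding That_def by simp
  qed
next
  case (scal c) then show ?case by simp
next
  case (add D1 D2) then show ?case by metis
next
  case (smult D c) then show ?case by metis
next
  case (comp D1 D2) then show ?case by blast
qed

theorem mainTheorem2:
  fixes R :: "'a::euclidean_space set" and alpha :: "nat \<Rightarrow> 'a" and q :: "nat \<Rightarrow> real"
    and D :: "('a \<Rightarrow> complex) \<Rightarrow> ('a \<Rightarrow> complex)" and lam mu :: 'a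
  assumes "root_system R" and "reduced_rs R" and "irreducible_rs R"
    and "is_base R DIM('a) alpha"
    and "\<forall>j\<in>{1..DIM('a)}. q j \<noteq> 0"
    and "D \<in> gen_alg ((\<lambda>j. That q alpha (alcove (pos_roots R DIM('a) alpha)) j) ` {1..DIM('a)})"
    and "lam \<in> weight_lattice R" and "mu \<in> weight_lattice R"
    and "wsim (weyl_group R) (chamber (pos_roots R DIM('a) alpha)) lam mu"
    and "\<forall>f. D f lam = 0"
  shows "\<forall>f. D f mu = 0"
proof
  fix f
  have R0: "0 \<notin> R" using assms(1) unfolding root_system_def by auto
  have st: "stabilizer (weyl_group R) lam = stabilizer (weyl_group R) mu"
    using assms(9) unfolding wsim_def by blast
  define g :: "'a \<Rightarrow> complex" where "g x = f ((SOME w. w \<in> weyl_group R \<and> w lam = x) mu)" for x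
  have hg: "\<forall>w\<in>weyl_group R. g (w lam) = f (w mu)"
  proof
    fix w assume w: "w \<in> weyl_group R"
    define w' where "w' = (SOME w'. w' \<in> weyl_group R \<and> w' lam = w lam)"
    have w': "w' \<in> weyl_group R \<and> w' lam = w lam" unfolding w'_def by (rule someI[of _ w]) (use w in auto)
    obtain v where v: "v \<in> weyl_group R" "v \<circ> w = id" "w \<circ> v = id" using weyl_inv[OF R0 w] by blast
    have vw: "\<And>x. v (w x) = x" using v(2) by (metis comp_apply id_apply)
    have wv: "\<And>x. w (v x) = x" using v(3) by (metis comp_apply id_apply)
    have t: "v \<circ> w' \<in> weyl_group R" using weyl_comp[OF v(1)] w' by blast
    have "(v \<circ> w') lam = lam" using w' vw by simp
    then have "(v \<circ> w') mu = mu" using st t unfolding stabilizer_def by blast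
    then have "w' mu = w mu" using wv by (metis comp_apply)
    then show "g (w lam) = f (w mu)" unfolding g_def w'_def[symmetric] by simp
  qed
  have "\<forall>w\<in>weyl_group R. D g (w lam) = D f (w mu)"
    using transfer[OF assms(1) assms(4) assms(9) assms(6)] hg by blast
  then have "D g lam = D f mu" using weyl_group.id[of R] by fastforce
  then show "D f mu = 0" using assms(10) by simp
qed

end
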